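(* Let $X$ be a $T_1$ space and $\mathcal{P}$ an ideal of closed subsets of $X$ containing every singleton subset of $X$. Then $X$ is $\tau\mathcal{P}$-compact if and only if $X$ is finite.
   Context: An ideal of closed subsets of $X$ is a family $\mathcal{P}$ of closed subsets closed under finite unions and under passing to closed subsets. $D_f$ is the set of discontinuity points of $f\in\mathbb{R}^X$; $C(X)_\mathcal{P}=\{f\in\mathbb{R}^X\colon\overline{D_f}\in\mathcal{P}\}$; for $f\in C(X)_\mathcal{P}$, $Z_\mathcal{P}(f)=\{x\colon f(x)=0\}$ and $Z_\mathcal{P}[X]$ is the set of all such sets. $X$ is $\tau\mathcal{P}$-compact if every subfamily of $Z_\mathcal{P}[X]$ with the finite intersection property has nonempty intersection. *)

theory Defs
  imports "HOL-Analysis.Analysis"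
begin

definition closed_ideal :: "'a topology \<Rightarrow> 'a set set \<Rightarrow> bool" where
  "closed_ideal X P \<longleftrightarrow>
     (\<forall>A\<in>P. closedin X A) \<and>
     (\<forall>A\<in>P. \<forall>B\<in>P. A \<union> B \<in> P) \<and>
     (\<forall>A\<in>P. \<forall>B. closedin X B \<and> B \<subseteq> A \<longrightarrow> B \<in> P)"

definition discont_points :: "'a topology \<Rightarrow> ('a \<Rightarrow> real) \<Rightarrow> 'a set" where
  "discont_points X f = {x \<in> topspace X. \<not> limitin euclideanreal f (f x) (atin X x)}"

definition C_P :: "'a topology \<Rightarrow> 'a set set \<Rightarrow> ('a \<Rightarrow> real) set" where
  "C_P X P = {f. X closure_of (discont_points X f) \<in> P}"

definition zero_set :: "'a topology \<Rightarrow> ('a \<Rightarrow> real) \<Rightarrow> 'a set" where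
  "zero_set X f = {x \<in> topspace X. f x = 0}"

definition Z_P :: "'a topology \<Rightarrow> 'a set set \<Rightarrow> 'a set set" where
  "Z_P X P = zero_set X ` C_P X P"

definition has_fip :: "'a set set \<Rightarrow> bool" where
  "has_fip \<F> \<longleftrightarrow> (\<forall>\<G>. \<G> \<subseteq> \<F> \<and> finite \<G> \<and> \<G> \<noteq> {} \<longrightarrow> \<Inter>\<G> \<noteq> {})"

definition tauP_compact :: "'a topology \<Rightarrow> 'a set set \<Rightarrow> bool" where
  "tauP_compact X P \<longleftrightarrow>
     (\<forall>\<F>. \<F> \<subseteq> Z_P X P \<and> \<F> \<noteq> {} \<and> has_fip \<F> \<longrightarrow> \<Inter>\<F> \<noteq> {})"

end

theory Submission
  imports Defs
begin

lemma indicator_in_ZP: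
  fixes X :: "'a topology" and P :: "'a set set"
  assumes t1: "t1_space X" and ci: "closed_ideal X P" and sing: "\<forall>x\<in>topspace X. {x} \<in> P"
    and x: "x \<in> topspace X"
  shows "topspace X - {x} \<in> Z_P X P"
proof -
  define f :: "'a \<Rightarrow> real" where "f = (\<lambda>y. if y = x then 1 else 0)"
  have cx: "closedin X {x}" using t1 x by (simp add: t1_space_closedin_singleton)
  have D: "discont_points X f \<subseteq> {x}"
  proof
    fix y assume y: "y \<in> discont_points X f"
    show "y \<in> {x}"
    proof (rule ccontr)
      assume "y \<notin> {x}"
      hence yx: "y \<noteq> x" by simp
      have yt: "y \<in> topspace X" using y by (simp add: discont_points_def)
      have op: "openin X (topspace X - {x})" using cx by (simp add: openin_diff)
      have "limitin euclideanreal f (f y) (atin X y)"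
        unfolding limitin_def
      proof (intro conjI allI impI)
        fix U assume U: "openin euclideanreal U \<and> f y \<in> U"
        show "eventually (\<lambda>z. f z \<in> U) (atin X y)"
          unfolding eventually_atin
        proof (rule disjI2, rule exI[of _ "topspace X - {x}"], intro conjI ballI)
          fix z assume "z \<in> topspace X - {x} - {y}"
          hence "z \<noteq> x" by blast
          hence "f z = f y" using yx by (simp add: f_def)
          thus "f z \<in> U" using U by simp
        qed (use op yt yx in simp_all)
      qed (simp add: f_def)
      thus False using y by (simp add: discont_points_def)
    qed
  qed
  have "X closure_of discont_points X f \<subseteq> X closure_of {x}"
    using D by (rule closure_of_mono)
  also have "\<dots> = {x}" using cx by (simp add: closure_of_closedin)
  finally have sb: "X closure_of discont_points X f \<subseteq> {x}" .
  have down: "\<forall>A\<in>P. \<forall>B. closedin X B \<and> B \<subseteq> A \<longrightarrow> B \<in> P"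
    using ci unfolding closed_ideal_def by blast
  have "{x} \<in> P" using sing x by blast
  hence "X closure_of discont_points X f \<in> P"
    using down sb closedin_closure_of by blast
  hence "f \<in> C_P X P" by (simp add: C_P_def)
  moreover have "zero_set X f = topspace X - {x}"
    unfolding zero_set_def f_def by auto
  ultimately show ?thesis unfolding Z_P_def by (metis rev_image_eqI)
qed

theorem corollary5p6:
  fixes X :: "'a topology" and P :: "'a set set"
  assumes "t1_space X"
    and "closed_ideal X P"
    and "\<forall>x\<in>topspace X. {x} \<in> P"
  shows "tauP_compact X P \<longleftrightarrow> finite (topspace X)"
proof
  assume c: "tauP_compact X P"
  show "finite (topspace X)"
  proof (rule ccontr)
    assume inf: "infinite (topspace X)"
    define F where "F = (\<lambda>x. topspace X - {x}) ` topspace X"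
    have sub: "F \<subseteq> Z_P X P" using indicator_in_ZP[OF assms] by (auto simp: F_def)
    have ne: "F \<noteq> {}" using inf by (auto simp: F_def)
    have fip: "has_fip F"
      unfolding has_fip_def
    proof (intro allI impI)
      fix G assume G: "G \<subseteq> F \<and> finite G \<and> G \<noteq> {}"
      obtain S where S0: "S \<subseteq> topspace X" "finite S" "G = (\<lambda>x. topspace X - {x}) ` S"
        using finite_subset_image[of G "\<lambda>x. topspace X - {x}" "topspace X"] G unfolding F_def by blast
      have S: "S \<subseteq> topspace X" "finite S" "G = (\<lambda>x. topspace X - {x}) ` S" "S \<noteq> {}"
        using S0 G by auto
      have "\<Inter>G = topspace X - S" using S by auto
      moreover have "topspace X - S \<noteq> {}" using inf S
        using Diff_eq_empty_iff finite_subset by metis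
      ultimately show "\<Inter>G \<noteq> {}" by simp
    qed
    have "\<Inter>F = {}" using ne by (auto simp: F_def)
    thus False using c sub ne fip unfolding tauP_compact_def by blast
  qed
next
  assume fin: "finite (topspace X)"
  show "tauP_compact X P"
    unfolding tauP_compact_def
  proof (intro allI impI)
    fix F assume F: "F \<subseteq> Z_P X P \<and> F \<noteq> {} \<and> has_fip F"
    have "Z_P X P \<subseteq> Pow (topspace X)"
      by (auto simp: Z_P_def zero_set_def)
    hence "F \<subseteq> Pow (topspace X)" using F by blast
    hence fF: "finite F" using fin by (simp add: finite_subset)
    have "\<forall>G. G \<subseteq> F \<and> finite G \<and> G \<noteq> {} \<longrightarrow> \<Inter>G \<noteq> {}" using F unfolding has_fip_def by simp
    hence "F \<subseteq> F \<and> finite F \<and> F \<noteq> {} \<longrightarrow> \<Inter>F \<noteq> {}" by (rule spec)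
    thus "\<Inter>F \<noteq> {}" using F fF by simp
  qed
qed

end
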